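(* Let $X$ be a Banach space as described in the context, let $f\in X$, and assume $\inf_{n\in\mathbb{N}}\|z^n\|>0$. If there exists a sequence $p_n\in\mathcal{P}_n[\mathbb{Z}]$ with $\lim_{n\to\infty}\|f-p_n\|=0$, then $f$ is a polynomial with integer coefficients.
   Context: $\mathbb{D}=\{z\in\mathbb{C}:|z|<1\}$. $X$ is a complex Banach space of functions analytic in $\mathbb{D}$ whose norm $\|\cdot\|$ satisfies: (i) $\|f(\cdot\, e^{it})\|=\|f(\cdot)\|$ for all $t\in\mathbb{R}$ and $f\in X$; (ii) $\|f\|<\infty$ for every entire function $f$; (iii) for all $f\in X$ and $g\in L[0,2\pi]$, $\big\|\frac{1}{2\pi}\int_0^{2\pi} f(ze^{it})g(t)\,dt\big\|\le \frac{1}{2\pi}\int_0^{2\pi}|g(t)|\,dt\cdot\|f\|$. $\|z^n\|$ is the norm in $X$ of $z\mapsto z^n$. A complex number is called an integer if its real and imaginary parts are integers; $\mathcal{P}_n[\mathbb{Z}]$ is the set of complex polynomials of degree at most $n-1$ with integer coefficients in this sense. *)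

theory Defs
  imports "HOL-Analysis.Analysis" "HOL-Computational_Algebra.Polynomial"
begin

definition gauss_int :: "complex \<Rightarrow> bool" where
  "gauss_int c \<longleftrightarrow> Re c \<in> \<int> \<and> Im c \<in> \<int>"

text \<open>P_n[Z]: polynomials of degree at most n-1 with Gaussian-integer coefficients
  (for n = 0 only the zero polynomial).\<close>
definition int_polys :: "nat \<Rightarrow> complex poly set" where
  "int_polys n = {q. (\<forall>i. gauss_int (coeff q i)) \<and> (q = 0 \<or> degree q < n)}"

text \<open>The standing assumptions on the space X (a set of functions, elements identified
  by their values on the unit disc) with norm N.\<close>
definition admissible_space ::
  "(complex \<Rightarrow> complex) set \<Rightarrow> ((complex \<Rightarrow> complex) \<Rightarrow> real) \<Rightarrow> bool" where
  "admissible_space X N \<longleftrightarrow>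
     \<comment> \<open>functions analytic in the disc\<close>
     (\<forall>f\<in>X. f holomorphic_on ball 0 1) \<and>
     \<comment> \<open>complex linear space\<close>
     (\<lambda>z. 0) \<in> X \<and>
     (\<forall>f\<in>X. \<forall>g\<in>X. (\<lambda>z. f z + g z) \<in> X) \<and>
     (\<forall>f\<in>X. \<forall>c. (\<lambda>z. c * f z) \<in> X) \<and>
     \<comment> \<open>norm axioms\<close>
     (\<forall>f\<in>X. N f \<ge> 0) \<and>
     (\<forall>f\<in>X. N f = 0 \<longleftrightarrow> (\<forall>z\<in>ball 0 1. f z = 0)) \<and>
     (\<forall>f\<in>X. \<forall>g\<in>X. N (\<lambda>z. f z + g z) \<le> N f + N g) \<and>
     (\<forall>f\<in>X. \<forall>c. N (\<lambda>z. c * f z) = norm c * N f) \<and>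
     \<comment> \<open>completeness\<close>
     (\<forall>s. (\<forall>n. s n \<in> X) \<longrightarrow>
        (\<forall>e>0. \<exists>M. \<forall>m\<ge>M. \<forall>n\<ge>M. N (\<lambda>z. s m z - s n z) < e) \<longrightarrow>
        (\<exists>l\<in>X. (\<lambda>n. N (\<lambda>z. s n z - l z)) \<longlonglongrightarrow> 0)) \<and>
     \<comment> \<open>(i) rotation invariance\<close>
     (\<forall>f\<in>X. \<forall>t::real. (\<lambda>z. f (z * exp (\<i> * t))) \<in> X \<and>
                        N (\<lambda>z. f (z * exp (\<i> * t))) = N f) \<and>
     \<comment> \<open>(ii) entire functions belong to X (have finite norm)\<close>
     (\<forall>f. f holomorphic_on UNIV \<longrightarrow> f \<in> X) \<and>
     \<comment> \<open>(iii) convolution inequality\<close>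
     (\<forall>f\<in>X. \<forall>g::real \<Rightarrow> complex. g absolutely_integrable_on {0..2*pi} \<longrightarrow>
        (let F = (\<lambda>z. (1 / (2*pi)) * integral {0..2*pi} (\<lambda>t. f (z * exp (\<i> * t)) * g t))
         in F \<in> X \<and>
            N F \<le> (1 / (2*pi)) * integral {0..2*pi} (\<lambda>t. norm (g t)) * N f))"

end

theory Submission imports Defs begin

lemma exp_int_integral:
  fixes j :: int
  shows "((\<lambda>t::real. exp (\<i> * of_int j * of_real t)) has_integral (if j = 0 then 2*pi else 0)) {0..2*pi}"
proof (cases "j = 0")
  case True
  then show ?thesis using has_integral_const_real[of "1::complex" 0 "2*pi"]
    by (simp add: scaleR_conv_of_real)
next
  case False
  let ?F = "\<lambda>t::real. exp (\<i> * of_int j * of_real t) / (\<i> * of_int j)"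
  have "((\<lambda>t::real. exp (\<i> * of_int j * of_real t)) has_integral (?F (2*pi) - ?F 0)) {0..2*pi}"
  proof (rule fundamental_theorem_of_calculus)
    fix x :: real assume "x \<in> {0..2*pi}"
    have "((\<lambda>w. exp (\<i> * of_int j * w) / (\<i> * of_int j)) has_field_derivative
          exp (\<i> * of_int j * of_real x)) (at (of_real x))"
      using False
      by (auto intro!: derivative_eq_intros)
    then have "(?F has_vector_derivative exp (\<i> * of_int j * of_real x)) (at x within {0..2*pi})"
      by (rule has_vector_derivative_real_field)
    then show "(?F has_vector_derivative exp (\<i> * of_int j * of_real x)) (at x within {0..2*pi})" .
  qed simp
  moreover have "?F (2*pi) - ?F 0 = 0"
  proof -
    have "exp (\<i> * of_int j * of_real (2*pi)) = 1"
      using exp_2pi_1_int[of j] by (simp add: mult_ac)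
    then show ?thesis by simp
  qed
  ultimately show ?thesis using False by simp
qed

lemma exp_combine:
  "exp (\<i> * of_real t) ^ i * exp (-(\<i> * of_nat k * of_real t)) =
   exp (\<i> * of_int (int i - int k) * of_real t)"
proof -
  have "exp (\<i> * of_real t) ^ i = exp (of_nat i * (\<i> * of_real t))"
    by (simp add: exp_of_nat_mult)
  then have "exp (\<i> * of_real t) ^ i * exp (-(\<i> * of_nat k * of_real t)) =
     exp (of_nat i * (\<i> * of_real t) + (-(\<i> * of_nat k * of_real t)))"
    by (metis exp_add)
  also have "of_nat i * (\<i> * of_real t) + (-(\<i> * of_nat k * of_real t)) =
     \<i> * of_int (int i - int k) * (of_real t :: complex)"
    by (simp add: algebra_simps)
  finally show ?thesis .
qed

lemma poly_coeff_integral: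
  fixes q :: "complex poly"
  shows "(1/(2*pi)) * integral {0..2*pi}
     (\<lambda>t::real. poly q (z * exp (\<i> * t)) * exp (-(\<i> * of_nat k * of_real t))) = coeff q k * z^k"
proof -
  have eq: "poly q (z * exp (\<i> * t)) * exp (-(\<i> * of_nat k * of_real t)) =
    (\<Sum>i\<le>degree q. coeff q i * z^i * exp (\<i> * of_int (int i - int k) * of_real t))" for t :: real
  proof -
    have "poly q (z * exp (\<i> * t)) * exp (-(\<i> * of_nat k * of_real t)) =
      (\<Sum>i\<le>degree q. coeff q i * z^i * (exp (\<i> * of_real t) ^ i * exp (-(\<i> * of_nat k * of_real t))))"
      unfolding poly_altdef sum_distrib_right
      by (intro sum.cong refl) (simp add: power_mult_distrib mult_ac)
    then show ?thesis by (simp add: exp_combine)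
  qed
  have hi: "((\<lambda>t::real. \<Sum>i\<le>degree q. coeff q i * z^i * exp (\<i> * of_int (int i - int k) * of_real t))
     has_integral (\<Sum>i\<le>degree q. coeff q i * z^i * (if int i - int k = 0 then 2*pi else 0))) {0..2*pi}"
    by (intro has_integral_sum finite_atMost has_integral_mult_right exp_int_integral)
  have "(\<Sum>i\<le>degree q. coeff q i * z^i * (if int i - int k = 0 then 2*pi else 0)) =
        (\<Sum>i\<le>degree q. (if i = k then coeff q k * z^k * 2*pi else 0))"
    by (intro sum.cong) auto
  also have "\<dots> = coeff q k * z^k * 2*pi"
    by (cases "k \<le> degree q") (auto simp: coeff_eq_0)
  finally have "integral {0..2*pi}
     (\<lambda>t::real. poly q (z * exp (\<i> * t)) * exp (-(\<i> * of_nat k * of_real t))) = coeff q k * z^k * 2*pi"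
    using hi eq by (simp add: integral_unique)
  then show ?thesis by simp
qed

lemma coeff_bound:
  fixes X :: "(complex \<Rightarrow> complex) set" and N :: "(complex \<Rightarrow> complex) \<Rightarrow> real"
  assumes A: "admissible_space X N"
  shows "norm (coeff d k) * N (\<lambda>z. z ^ k) \<le> N (\<lambda>z. poly d z)"
proof -
  note D = A[unfolded admissible_space_def Let_def]
  note ent = D[THEN conjunct2, THEN conjunct2, THEN conjunct2, THEN conjunct2, THEN conjunct2,
          THEN conjunct2, THEN conjunct2, THEN conjunct2, THEN conjunct2, THEN conjunct2, THEN conjunct1, rule_format]
  note sc = D[THEN conjunct2, THEN conjunct2, THEN conjunct2, THEN conjunct2, THEN conjunct2,
          THEN conjunct2, THEN conjunct2, THEN conjunct1, rule_format]
  note conv = D[THEN conjunct2, THEN conjunct2, THEN conjunct2, THEN conjunct2, THEN conjunct2,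
          THEN conjunct2, THEN conjunct2, THEN conjunct2, THEN conjunct2, THEN conjunct2, THEN conjunct2, rule_format, THEN conjunct2]
  define g where "g = (\<lambda>t::real. exp (-(\<i> * of_nat k * of_real t)))"
  have pX: "(\<lambda>z. poly d z) \<in> X"
    by (rule ent) (auto intro!: holomorphic_intros)
  have zX: "(\<lambda>z. z ^ k) \<in> X"
    by (rule ent) (auto intro!: holomorphic_intros)
  have gi: "g absolutely_integrable_on {0..2*pi}"
    unfolding g_def by (intro absolutely_integrable_continuous_real continuous_intros)
  have ng: "norm (g t) = 1" for t
    unfolding g_def by (simp add: norm_exp_eq_Re)
  have int1: "integral {0..2*pi} (\<lambda>t. norm (g t)) = 2*pi"
    by (simp add: ng)
  have F: "(\<lambda>z. (1 / (2*pi)) * integral {0..2*pi} (\<lambda>t. poly d (z * exp (\<i> * t)) * g t))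
      = (\<lambda>z. coeff d k * z ^ k)"
    unfolding g_def by (rule ext, rule poly_coeff_integral)
  have "N (\<lambda>z. coeff d k * z ^ k) \<le> (1 / (2*pi)) * integral {0..2*pi} (\<lambda>t. norm (g t)) * N (\<lambda>z. poly d z)"
    using conv[OF pX gi] unfolding F .
  also have "\<dots> = N (\<lambda>z. poly d z)" using int1 by simp
  finally show ?thesis using sc[OF zX, of "coeff d k"] by simp
qed

lemma gauss_small:
  assumes "gauss_int c" "norm c < 1"
  shows "c = 0"
proof -
  have r: "\<bar>Re c\<bar> < 1" "\<bar>Im c\<bar> < 1"
    using assms(2) abs_Re_le_cmod abs_Im_le_cmod by (meson le_less_trans)+
  from assms(1) obtain a b :: int where "Re c = of_int a" "Im c = of_int b"
    unfolding gauss_int_def by (auto elim!: Ints_cases)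
  with r have "Re c = 0" "Im c = 0" by auto
  then show ?thesis by (simp add: complex_eq_iff)
qed

theorem theorem5p1:
  fixes X :: "(complex \<Rightarrow> complex) set" and N :: "(complex \<Rightarrow> complex) \<Rightarrow> real"
    and f :: "complex \<Rightarrow> complex" and p :: "nat \<Rightarrow> complex poly"
  assumes "admissible_space X N"
    and "f \<in> X"
    and "(INF n::nat. N (\<lambda>z. z ^ n)) > 0"
    and "\<forall>n. p n \<in> int_polys n"
    and "(\<lambda>n. N (\<lambda>z. f z - poly (p n) z)) \<longlonglongrightarrow> 0"
  shows "\<exists>q. (\<forall>i. gauss_int (coeff q i)) \<and> (\<forall>z\<in>ball 0 1. f z = poly q z)"
proof -
  note A = assms(1)
  note D = A[unfolded admissible_space_def]
  note C = D[THEN conjunct2, THEN conjunct2]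
  note ent = C[THEN conjunct2, THEN conjunct2, THEN conjunct2,
          THEN conjunct2, THEN conjunct2, THEN conjunct2, THEN conjunct2, THEN conjunct2, THEN conjunct1, rule_format]
  note sc = C[THEN conjunct2, THEN conjunct2, THEN conjunct2,
          THEN conjunct2, THEN conjunct2, THEN conjunct1, rule_format]
  note scX = C[THEN conjunct2, THEN conjunct1, rule_format]
  note addX = C[THEN conjunct1, rule_format]
  note tri = C[THEN conjunct2, THEN conjunct2, THEN conjunct2, THEN conjunct2, THEN conjunct1, rule_format]
  note nonneg = C[THEN conjunct2, THEN conjunct2, THEN conjunct1, rule_format]
  note zero = C[THEN conjunct2, THEN conjunct2, THEN conjunct2, THEN conjunct1, rule_format]
  define \<delta> where "\<delta> = (INF n::nat. N (\<lambda>z. z ^ n))"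
  have dpos: "\<delta> > 0" using assms(3) by (simp add: \<delta>_def)
  have zX: "(\<lambda>z. z ^ k) \<in> X" for k
    by (rule ent) (auto intro!: holomorphic_intros)
  have dle: "\<delta> \<le> N (\<lambda>z. z ^ k)" for k
    unfolding \<delta>_def
    by (rule cINF_lower) (auto intro!: bdd_belowI[where m=0] nonneg zX)
  define h where "h = (\<lambda>n z. f z - poly (p n) z)"
  have hX: "h n \<in> X" for n
  proof -
    have "(\<lambda>z. f z + (\<lambda>z. (-1) * poly (p n) z) z) \<in> X"
      by (intro addX assms(2) scX ent) (auto intro!: holomorphic_intros)
    then show ?thesis unfolding h_def by simp
  qed
  have hlim: "(\<lambda>n. N (h n)) \<longlonglongrightarrow> 0" using assms(5) unfolding h_def .
  then obtain n0 where n0': "\<And>n. n \<ge> n0 \<Longrightarrow> norm (N (h n) - 0) < \<delta> / 2"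
    using dpos LIMSEQ_D[OF hlim, of "\<delta>/2"] by auto
  have n0: "N (h n) < \<delta> / 2" if "n \<ge> n0" for n
    using n0'[OF that] nonneg[OF hX] by simp
  have same: "p n = p n0" if "n \<ge> n0" for n
  proof -
    define d where "d = p n - p n0"
    have "(\<lambda>z. poly d z) = (\<lambda>z. h n0 z + (\<lambda>z. (-1) * h n z) z)"
      unfolding d_def h_def by (auto simp: fun_eq_iff)
    then have "N (\<lambda>z. poly d z) \<le> N (h n0) + N (\<lambda>z. (-1) * h n z)"
      by (simp only:) (rule tri[OF hX scX[OF hX]])
    also have "N (h n0) + N (\<lambda>z. (-1) * h n z) = N (h n0) + N (h n)"
      by (simp only: sc[OF hX, of "-1"] norm_minus_cancel norm_one mult_1)
    also have "\<dots> < \<delta>" using n0[of n0] n0[OF that] by simp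
    finally have Nd: "N (\<lambda>z. poly d z) < \<delta>" .
    have "coeff d k = 0" for k
    proof (rule gauss_small)
      have "gauss_int (coeff (p n) k)" "gauss_int (coeff (p n0) k)"
        using assms(4) unfolding int_polys_def by auto
      then show "gauss_int (coeff d k)"
        unfolding d_def gauss_int_def by auto
      have "norm (coeff d k) * \<delta> \<le> norm (coeff d k) * N (\<lambda>z. z ^ k)"
        by (intro mult_left_mono dle) auto
      also have "\<dots> \<le> N (\<lambda>z. poly d z)" by (rule coeff_bound[OF A])
      finally have "norm (coeff d k) * \<delta> < 1 * \<delta>" using Nd by simp
      then show "norm (coeff d k) < 1" using dpos by (meson mult_less_cancel_right_pos)
    qed
    then have "d = 0" by (simp add: poly_eq_iff)
    then show ?thesis unfolding d_def by simp
  qed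
  have ev: "eventually (\<lambda>n. N (h n) = N (h n0)) sequentially"
    unfolding eventually_sequentially
  proof (intro exI[of _ n0] allI impI)
    fix n assume "n \<ge> n0"
    then have "p n = p n0" by (rule same)
    then show "N (h n) = N (h n0)" unfolding h_def by simp
  qed
  have "(\<lambda>n. N (h n)) \<longlonglongrightarrow> N (h n0)"
    using tendsto_cong[OF ev] tendsto_const by blast
  then have "N (h n0) = 0" using hlim by (rule LIMSEQ_unique)
  then have "\<forall>z\<in>ball 0 1. f z = poly (p n0) z"
    using zero[OF hX] unfolding h_def by simp
  moreover have "\<forall>i. gauss_int (coeff (p n0) i)"
    using assms(4) unfolding int_polys_def by auto
  ultimately show ?thesis by blast
qed

end
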